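(* Let $n = 8k+5$ with $k\ge 0$ an integer, and let $m \ge 4n-4$. Let $a,b$ be integers of different parity with $1\le a$, $a+2 < b$, and $b+2 \le m$. Then the permutation $(a,a+2)(b,b+2)\in S_m$ is a product of $n$-crossing permutations over $S_m$.
   Context: For integers $2\le n\le m$ and $1 \le j \le m-n+1$, the $n$-crossing permutation $\pi_j\in S_m$ is $\pi_j=(j,\,j+n-1)(j+1,\,j+n-2)\cdots$, i.e. the involution sending $i \mapsto 2j+n-1-i$ for $j\le i\le j+n-1$ and fixing all other elements of $\{1,\dots,m\}$. The $n$-crossing permutations over $S_m$ are $\pi_1,\dots,\pi_{m-n+1}$. (The permutations $(a,a+2)(b,b+2)$ in the claim are exactly the products of one even-string and one odd-string transposition $(i,i+2)$ that correspond to a pair of triple crossings on disjoint triples of consecutive strings.) *)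

theory Defs
  imports "HOL-Combinatorics.Transposition"
begin

text \<open>Permutations of {1..m} are represented as functions nat => nat fixing everything
outside {1..m}. The n-crossing permutation pi_j sends i to 2j+n-1-i for j <= i <= j+n-1
and fixes all other points.\<close>

definition crossing :: "nat \<Rightarrow> nat \<Rightarrow> nat \<Rightarrow> nat" where
  "crossing n j = (\<lambda>i. if j \<le> i \<and> i \<le> j + n - 1 then 2 * j + n - 1 - i else i)"

definition product_of_crossings :: "nat \<Rightarrow> nat \<Rightarrow> (nat \<Rightarrow> nat) \<Rightarrow> bool" where
  "product_of_crossings n m p \<longleftrightarrow>
     (\<exists>js. set js \<subseteq> {1..m - n + 1} \<and> p = foldr (\<circ>) (map (crossing n) js) id)"

end

theory Submission
  imports Defs
begin


definition tau :: "nat \<Rightarrow> nat \<Rightarrow> nat" where "tau x = transpose x (x+2)"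

lemma tau_apply: "tau x i = (if i = x then x+2 else if i = x+2 then x else i)"
  by (simp add: tau_def transpose_def)

lemma u_formula:
  assumes "n \<ge> 5"
  shows "crossing n j \<circ> crossing n (j+1) \<circ> crossing n (j+2) =
    (\<lambda>i. if i = j then j+n-1 else if i = j+2 then j+n+1 else
          if j \<le> i \<and> i \<le> j+n+1 then 2*j+n+1-i else i)"
proof (rule ext)
  fix i
  consider "i < j" | "i = j" | "i = j+1" | "i = j+2" | "j+3 \<le> i \<and> i \<le> j+n-1" | "i = j+n" | "i = j+n+1" | "i > j+n+1"
    using assms by linarith
  then show "(crossing n j \<circ> crossing n (j+1) \<circ> crossing n (j+2)) i =
    (if i = j then j+n-1 else if i = j+2 then j+n+1 else
          if j \<le> i \<and> i \<le> j+n+1 then 2*j+n+1-i else i)"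
    using assms by cases (auto simp: crossing_def)
qed


definition U :: "nat \<Rightarrow> nat \<Rightarrow> nat \<Rightarrow> nat" where
 "U n j = (\<lambda>i. if i = j then j+n-1 else if i = j+2 then j+n+1 else
          if j \<le> i \<and> i \<le> j+n+1 then 2*j+n+1-i else i)"

lemma UU: assumes "n \<ge> 5" shows "U n j \<circ> U n j = tau j \<circ> tau (j+n-1)"
proof (rule ext)
  fix i
  consider "i < j" | "i = j" | "i = j+1" | "i = j+2" | "j+3 \<le> i \<and> i \<le> j+n-2" | "i = j+n-1" | "i = j+n" | "i = j+n+1" | "i > j+n+1"
    using assms by linarith
  then show "(U n j \<circ> U n j) i = (tau j \<circ> tau (j+n-1)) i"
    using assms by cases (auto simp: tau_apply U_def)
qed


lemma crossing_in: "j \<le> i \<Longrightarrow> i \<le> j+n-1 \<Longrightarrow> crossing n j i = 2*j+n-1-i"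
  by (simp add: crossing_def)

lemma crossing_out: assumes "\<not> (j \<le> i \<and> i \<le> j+n-1)" shows "crossing n j i = i"
  by (simp only: crossing_def if_not_P[OF assms])

lemma crossing_invol: assumes "n \<ge> 1" shows "crossing n j \<circ> crossing n j = id"
proof (rule ext)
  fix i
  show "(crossing n j \<circ> crossing n j) i = id i"
  proof (cases "j \<le> i \<and> i \<le> j + n - 1")
    case True
    then have "crossing n j i = 2*j+n-1-i" by (simp add: crossing_def)
    moreover have "j \<le> 2*j+n-1-i \<and> 2*j+n-1-i \<le> j + n - 1" using True assms by linarith
    ultimately show ?thesis using True assms by (simp add: crossing_def; linarith)
  next
    case False then show ?thesis by (simp add: crossing_out)
  qed
qed

lemma inv_conj: assumes "c \<circ> c = id" shows "c \<circ> transpose a b \<circ> c = transpose (c a) (c b)"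
proof (rule ext)
  fix i
  have h: "\<And>z. c (c z) = z" using assms by (metis comp_apply id_apply)
  show "(c \<circ> transpose a b \<circ> c) i = transpose (c a) (c b) i"
    unfolding transpose_def comp_def by (metis h)
qed

lemma conj_formula:
  assumes "n \<ge> 5" "x + 3 \<le> j" "j \<le> x + n - 1"
  shows "crossing n j \<circ> (tau x \<circ> tau (x+n-1)) \<circ> crossing n j = tau x \<circ> tau (2*j-x-2)"
proof -
  let ?c = "crossing n j"
  have inv: "?c \<circ> ?c = id" using assms by (simp add: crossing_invol)
  have "?c \<circ> (tau x \<circ> tau (x+n-1)) \<circ> ?c = (?c \<circ> tau x \<circ> ?c) \<circ> (?c \<circ> tau (x+n-1) \<circ> ?c)"
    by (metis (no_types, lifting) comp_assoc comp_id inv)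
  also have "?c \<circ> tau x \<circ> ?c = transpose (?c x) (?c (x+2))" unfolding tau_def by (rule inv_conj[OF inv])
  also have "?c \<circ> tau (x+n-1) \<circ> ?c = transpose (?c (x+n-1)) (?c (x+n-1+2))" unfolding tau_def by (rule inv_conj[OF inv])
  also have "?c x = x" using assms by (intro crossing_out) linarith
  also have "?c (x+2) = x+2" using assms by (intro crossing_out) linarith
  also have "?c (x+n-1) = 2*j-x" using assms by (subst crossing_in) linarith+
  also have "?c (x+n-1+2) = 2*j-x-2" using assms by (subst crossing_in) linarith+
  finally have r: "?c \<circ> (tau x \<circ> tau (x+n-1)) \<circ> ?c = transpose x (x+2) \<circ> transpose (2*j-x) (2*j-x-2)" .
  have eq: "2*j-x-2+2 = 2*j-x" using assms by linarith
  have "tau (2*j-x-2) = transpose (2*j-x) (2*j-x-2)" unfolding tau_def eq by (rule transpose_commute)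
  then show ?thesis using r by (simp add: tau_def)
qed


lemma foldr_comp_id: "foldr (\<circ>) fs g = foldr (\<circ>) fs id \<circ> g"
  by (induction fs) (auto simp: comp_assoc)

lemma poc_comp:
  assumes "product_of_crossings n m f" "product_of_crossings n m g"
  shows "product_of_crossings n m (f \<circ> g)"
proof -
  obtain js1 where 1: "set js1 \<subseteq> {1..m-n+1}" "f = foldr (\<circ>) (map (crossing n) js1) id"
    using assms(1) unfolding product_of_crossings_def by blast
  obtain js2 where 2: "set js2 \<subseteq> {1..m-n+1}" "g = foldr (\<circ>) (map (crossing n) js2) id"
    using assms(2) unfolding product_of_crossings_def by blast
  have "foldr (\<circ>) (map (crossing n) (js1 @ js2)) id = f \<circ> g"
    using 1 2 foldr_comp_id[of "map (crossing n) js1" "foldr (\<circ>) (map (crossing n) js2) id"] by simp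
  then show ?thesis unfolding product_of_crossings_def using 1 2
    by (metis set_append le_sup_iff)
qed

lemma poc_id: "product_of_crossings n m id"
  unfolding product_of_crossings_def by (rule exI[of _ "[]"]) simp

lemma poc_cross: assumes "1 \<le> j" "j + n - 1 \<le> m" "1 \<le> n"
  shows "product_of_crossings n m (crossing n j)"
  unfolding product_of_crossings_def using assms by (intro exI[of _ "[j]"]) auto

lemma tau_invol: "tau z \<circ> tau z = id"
  by (simp add: tau_def)

lemma transpose_disj_commute:
  assumes "a \<noteq> c" "a \<noteq> d" "b \<noteq> c" "b \<noteq> d"
  shows "transpose a b \<circ> transpose c d = transpose c d \<circ> transpose a b"
  using assms by (auto simp: fun_eq_iff transpose_def)

lemma tau_commute: "x + 4 \<le> y \<Longrightarrow> tau x \<circ> tau y = tau y \<circ> tau x"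
  unfolding tau_def by (rule transpose_disj_commute) auto


definition tprod :: "nat list \<Rightarrow> nat \<Rightarrow> nat" where
  "tprod xs = foldr (\<lambda>x f. tau x \<circ> f) xs id"

lemma tprod_simps[simp]: "tprod [] = id" "tprod (x # xs) = tau x \<circ> tprod xs"
  by (simp_all add: tprod_def)

lemma tprod_append: "tprod (xs @ ys) = tprod xs \<circ> tprod ys"
  by (induction xs) (simp_all add: comp_assoc)

fun tlist :: "nat \<Rightarrow> nat \<Rightarrow> nat list" where
  "tlist u 0 = [u]"
| "tlist u (Suc e) = u # tlist (u+2) e @ [u]"

lemma tlist_len: "length (tlist u e) = 2*e+1"
  by (induction e arbitrary: u) auto

lemma tlist_set: "z \<in> set (tlist u e) \<Longrightarrow> u \<le> z \<and> z \<le> u+2*e \<and> even (z+u)"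
proof (induction e arbitrary: u)
  case 0 then show ?case by simp
next
  case (Suc e)
  then have "z = u \<or> z \<in> set (tlist (u+2) e)" by auto
  then show ?case
  proof
    assume "z \<in> set (tlist (u+2) e)"
    then have "u+2 \<le> z \<and> z \<le> u+2+2*e \<and> even (z+(u+2))" using Suc.IH by blast
    then show ?thesis by simp
  qed simp
qed

lemma tau_conj_transpose: "w \<noteq> u \<Longrightarrow> w \<noteq> u+2 \<Longrightarrow> tau u \<circ> transpose (u+2) w \<circ> tau u = transpose u w"
proof -
  assume "w \<noteq> u" "w \<noteq> u+2"
  then have "tau u \<circ> transpose (u+2) w \<circ> tau u = transpose (tau u (u+2)) (tau u w)"
    by (intro inv_conj tau_invol)
  also have "\<dots> = transpose u w" using \<open>w \<noteq> u\<close> \<open>w \<noteq> u+2\<close> by (simp add: tau_apply)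
  finally show ?thesis .
qed

lemma tlist_prod: "tprod (tlist u e) = transpose u (u+2*e+2)"
proof (induction e arbitrary: u)
  case 0 then show ?case by (simp add: tau_def)
next
  case (Suc e)
  have "tprod (tlist u (Suc e)) = tau u \<circ> transpose (u+2) (u+2+2*e+2) \<circ> tau u"
    using Suc.IH[of "u+2"] by (simp add: tprod_append comp_assoc)
  also have "\<dots> = transpose u (u+2+2*e+2)" by (rule tau_conj_transpose) auto
  finally show ?case by (simp add: add.assoc)
qed

definition rfl :: "nat \<Rightarrow> nat \<Rightarrow> nat \<Rightarrow> nat" where
  "rfl c h = (\<lambda>i. if c - h \<le> i \<and> i \<le> c + h then 2*c - i else i)"

lemma cross_refl: "n = 2*h+1 \<Longrightarrow> crossing n j = rfl (j+h) h"
  by (auto simp: fun_eq_iff crossing_def rfl_def)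

lemma refl2: assumes "2 \<le> c" shows "rfl c 2 = transpose (c-1) (c+1) \<circ> transpose (c-2) (c+2)"
proof (rule ext)
  fix i
  consider "i < c-2" | "i = c-2" | "i = c-1" | "i = c" | "i = c+1" | "i = c+2" | "i > c+2" using assms by linarith
  then show "rfl c 2 i = (transpose (c-1) (c+1) \<circ> transpose (c-2) (c+2)) i"
    using assms by cases (auto simp: rfl_def transpose_def)
qed

definition tp :: "nat \<Rightarrow> nat \<Rightarrow> nat \<Rightarrow> nat" where
  "tp c d = transpose (c-d) (c+d)"

lemma rfl_one: assumes "Suc r \<le> c" shows "rfl c (Suc r) = rfl c r \<circ> tp c (Suc r)"
proof (rule ext)
  fix i
  consider "i = c-(r+1)" | "i = c+(r+1)" | "c-r \<le> i \<and> i \<le> c+r" | "i < c-(r+1) \<or> i > c+(r+1)" using assms by linarith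
  then show "rfl c (Suc r) i = (rfl c r \<circ> tp c (Suc r)) i"
  proof cases
    case 1 then show ?thesis using assms by (simp add: rfl_def tp_def)
  next
    case 2 then show ?thesis using assms by (simp add: rfl_def tp_def; linarith)
  next
    case 3
    then have "transpose (c-(r+1)) (c+(r+1)) i = i" using assms by (intro transpose_apply_other) linarith+
    moreover have "c - Suc r \<le> i" "i \<le> c + Suc r" using 3 by linarith+
    ultimately show ?thesis using 3 by (simp add: rfl_def tp_def)
  next
    case 4
    then have "transpose (c-(r+1)) (c+(r+1)) i = i" using assms by (intro transpose_apply_other) linarith+
    then show ?thesis using 4 by (auto simp add: rfl_def tp_def)
  qed
qed

lemma tp_commute: "d \<noteq> d' \<Longrightarrow> d \<le> c \<Longrightarrow> d' \<le> c \<Longrightarrow> even (d + d' + 1) \<Longrightarrow> tp c d \<circ> tp c d' = tp c d' \<circ> tp c d"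
  unfolding tp_def by (intro transpose_disj_commute) linarith+

lemma refl_step: assumes "Suc (Suc (Suc (Suc r))) \<le> c"
  shows "rfl c (Suc (Suc (Suc (Suc r)))) = rfl c r \<circ> ((tp c (Suc r) \<circ> tp c (Suc (Suc (Suc r)))) \<circ>
     (tp c (Suc (Suc r)) \<circ> tp c (Suc (Suc (Suc (Suc r))))))"
proof -
  have "rfl c (Suc (Suc (Suc (Suc r)))) = rfl c r \<circ> tp c (Suc r) \<circ> tp c (Suc (Suc r)) \<circ> tp c (Suc (Suc (Suc r))) \<circ> tp c (Suc (Suc (Suc (Suc r))))"
    using assms by (simp add: rfl_one)
  also have "tp c (Suc (Suc r)) \<circ> tp c (Suc (Suc (Suc r))) = tp c (Suc (Suc (Suc r))) \<circ> tp c (Suc (Suc r))"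
    using assms by (intro tp_commute) auto
  ultimately show ?thesis by (simp add: comp_assoc)
qed


context
  fixes n m :: nat
  assumes n5: "n \<ge> 5" and mbig: "3 * n \<le> m + 2"
begin

definition S :: "nat \<Rightarrow> nat \<Rightarrow> bool" where
  "S x y \<longleftrightarrow> product_of_crossings n m (tau x \<circ> tau y)"

lemma S_D: assumes "1 \<le> x" "x + n + 1 \<le> m" shows "S x (x+n-1)"
proof -
  let ?u = "crossing n x \<circ> crossing n (x+1) \<circ> crossing n (x+2)"
  have u: "product_of_crossings n m ?u"
    using assms n5 by (intro poc_comp poc_cross) auto
  have "?u \<circ> ?u = tau x \<circ> tau (x+n-1)"
    using u_formula[OF n5, of x] UU[OF n5, of x] by (simp add: U_def)
  then show ?thesis unfolding S_def using poc_comp[OF u u] by simp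
qed

lemma S_step: assumes "2 \<le> t" "t \<le> n - 2" "1 \<le> x" "x + t + n \<le> m" shows "S x (x+2*t)"
proof -
  let ?j = "x+t+1"
  have c: "product_of_crossings n m (crossing n ?j)" using assms n5 by (intro poc_cross) auto
  have d: "product_of_crossings n m (tau x \<circ> tau (x+n-1))" using S_D assms unfolding S_def by simp
  have "crossing n ?j \<circ> (tau x \<circ> tau (x+n-1)) \<circ> crossing n ?j = tau x \<circ> tau (2*?j-x-2)"
    using assms n5 by (intro conj_formula) auto
  moreover have "2*?j-x-2 = x+2*t" by simp
  ultimately show ?thesis unfolding S_def using poc_comp[OF poc_comp[OF c d] c] by simp
qed

lemma S_sym: assumes "S x y" "x + 4 \<le> y \<or> y + 4 \<le> x" shows "S y x"
proof -
  have "tau x \<circ> tau y = tau y \<circ> tau x" using assms(2) tau_commute[of x y] tau_commute[of y x] by auto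
  then show ?thesis using assms(1) unfolding S_def by simp
qed

lemma S_trans: "S x z \<Longrightarrow> S z y \<Longrightarrow> S x y"
proof -
  assume a: "S x z" "S z y"
  have "(tau x \<circ> tau z) \<circ> (tau z \<circ> tau y) = tau x \<circ> tau y"
    by (metis comp_assoc comp_id tau_invol)
  then show ?thesis using poc_comp a unfolding S_def by metis
qed

lemma S_adj: assumes "1 \<le> u" "u + 4 \<le> m" shows "S u (u+2) \<and> S (u+2) u"
proof (cases "u + n + 4 \<le> m")
  case True
  have 1: "S u (u+6)" using S_step[of 3 u] True assms n5 by (simp add: numeral_eq_Suc)
  have 2: "S (u+2) (u+6)" using S_step[of 2 "u+2"] True assms n5 by (simp add: numeral_eq_Suc add.assoc)
  have 3: "S (u+6) (u+2)" "S (u+6) u" using S_sym 1 2 by auto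
  show ?thesis using S_trans 1 2 3 by blast
next
  case False
  define v where "v = u + 6 - 2*n"
  have v1: "1 \<le> v" "v + 2*(n-3) = u" "v + 2*(n-2) = u+2" using False mbig n5 unfolding v_def by linarith+
  have 1: "S v u" using S_step[of "n-3" v] v1 assms n5 by simp
  have 2: "S v (u+2)" using S_step[of "n-2" v] v1 assms n5 by simp
  have 3: "S u v" "S (u+2) v" using S_sym 1 2 v1 n5 by auto
  show ?thesis using S_trans 1 2 3 by blast
qed

lemma S_dist: assumes "1 \<le> x" "x + 2*d + 2 \<le> m" shows "S x (x+2*d) \<and> S (x+2*d) x"
  using assms
proof (induction d)
  case 0 then show ?case unfolding S_def by (simp add: tau_invol poc_id)
next
  case (Suc d)
  have a: "S (x+2*d) (x+2*d+2) \<and> S (x+2*d+2) (x+2*d)" using S_adj[of "x+2*d"] Suc.prems by simp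
  have b: "S x (x+2*d) \<and> S (x+2*d) x" using Suc.IH Suc.prems by simp
  have e: "x + 2*Suc d = x+2*d+2" by simp
  show ?case unfolding e using a b S_trans by blast
qed

lemma S_all: assumes "1 \<le> x" "1 \<le> y" "x + 2 \<le> m" "y + 2 \<le> m" "even (x + y)" shows "S x y"
proof (cases "x \<le> y")
  case True
  have "y = x + 2*((y-x) div 2)" using True assms(5) by presburger
  then show ?thesis using S_dist[of x "(y-x) div 2"] assms by (metis)
next
  case False
  have "x = y + 2*((x-y) div 2)" using False assms(5) by presburger
  then show ?thesis using S_dist[of y "(x-y) div 2"] assms by (metis)
qed


lemma tprod_even:
  "\<forall>x\<in>set xs. 1 \<le> x \<and> x+2 \<le> m \<and> even (x+p) \<Longrightarrow> even (length xs) \<Longrightarrow> product_of_crossings n m (tprod xs)"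
proof (induction xs rule: induct_list012)
  case 1 then show ?case by (simp only: tprod_simps poc_id)
next
  case (2 x) then show ?case by simp
next
  case (3 x y zs)
  have h: "1 \<le> x" "x+2 \<le> m" "even (x+p)" "1 \<le> y" "y+2 \<le> m" "even (y+p)" using 3(3) by auto
  have "even (x+y)" using h(3,6) by presburger
  then have "S x y" using h by (intro S_all)
  moreover have "product_of_crossings n m (tprod zs)" using 3 by simp
  ultimately have "product_of_crossings n m ((tau x \<circ> tau y) \<circ> tprod zs)" unfolding S_def by (rule poc_comp)
  then show ?case by (simp only: tprod_simps comp_assoc)
qed

lemma S2: assumes "1 \<le> u" "u < v" "v \<le> m" "1 \<le> x" "x < y" "y \<le> m" "even (u+v)" "even (x+y)" "even (u+x)"
  shows "product_of_crossings n m (transpose u v \<circ> transpose x y)"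
proof -
  define e where "e = (v-u-2) div 2"
  define e' where "e' = (y-x-2) div 2"
  have ve: "v = u+2*e+2" using assms(2,7) unfolding e_def by presburger
  have ye: "y = x+2*e'+2" using assms(5,8) unfolding e'_def by presburger
  have "tprod (tlist u e @ tlist x e') = transpose u v \<circ> transpose x y"
    by (simp add: tprod_append tlist_prod ve ye)
  moreover have "product_of_crossings n m (tprod (tlist u e @ tlist x e'))"
  proof (rule tprod_even[where p = u])
    show "\<forall>z\<in>set (tlist u e @ tlist x e'). 1 \<le> z \<and> z + 2 \<le> m \<and> even (z + u)"
    proof
      fix z assume "z \<in> set (tlist u e @ tlist x e')"
      then have "z \<in> set (tlist u e) \<or> z \<in> set (tlist x e')" by simp
      then show "1 \<le> z \<and> z + 2 \<le> m \<and> even (z + u)"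
      proof
        assume "z \<in> set (tlist u e)"
        then show ?thesis using tlist_set[of z u e] assms ve by simp
      next
        assume "z \<in> set (tlist x e')"
        then have "x \<le> z \<and> z \<le> x+2*e' \<and> even (z+x)" by (rule tlist_set)
        moreover have "even (u+x)" using assms(9) .
        ultimately have "even (z+u)" by presburger
        moreover have "1 \<le> z" "z + 2 \<le> m" using \<open>x \<le> z \<and> z \<le> x+2*e' \<and> even (z+x)\<close> assms(4,6) ye by linarith+
        ultimately show ?thesis by simp
      qed
    qed
    show "even (length (tlist u e @ tlist x e'))" by (simp add: tlist_len)
  qed
  ultimately show ?thesis by simp
qed

lemma X_ind:
  assumes "1 \<le> a" "a+2 \<le> m" "1 \<le> b" "b+2 \<le> m" "odd (a+b)" "even (c + b)"
    "i \<le> k" "4*k+3 \<le> c" "c + 4*k+2 \<le> m"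
  shows "product_of_crossings n m (tau a \<circ> tau b \<circ> rfl c (4*i+2))"
  using assms(7)
proof (induction i)
  case 0
  let ?T1 = "transpose (c-1) (c+1)" and ?T2 = "transpose (c-2) (c+2)"
  have r: "rfl c (4*0+2) = ?T1 \<circ> ?T2" using refl2[of c] assms(8) by (simp only: mult_0_right add_0)
  have com: "tau b \<circ> ?T1 = ?T1 \<circ> tau b" unfolding tau_def
  proof (rule transpose_disj_commute)
    show "b \<noteq> c - 1" "b \<noteq> c + 1" "b + 2 \<noteq> c - 1" "b + 2 \<noteq> c + 1"
      using assms(6) assms(8) by presburger+
  qed
  have "tau a \<circ> tau b \<circ> rfl c (4*0+2) = (tau a \<circ> ?T1) \<circ> (tau b \<circ> ?T2)"
    unfolding r by (metis com comp_assoc)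
  moreover have "product_of_crossings n m (tau a \<circ> ?T1)" unfolding tau_def
  proof (rule S2)
    show "1 \<le> a" "a < a+2" "a+2 \<le> m" "1 \<le> c - 1" "c - 1 < c + 1" "c + 1 \<le> m"
      using assms by linarith+
    show "even (a + (a+2))" by simp
    have "c - 1 + (c + 1) = 2*c" using assms(8) by linarith
    then show "even (c - 1 + (c + 1))" by simp
    show "even (a + (c - 1))" using assms(5,6,8) by presburger
  qed
  moreover have "product_of_crossings n m (tau b \<circ> ?T2)" unfolding tau_def
  proof (rule S2)
    show "1 \<le> b" "b < b+2" "b+2 \<le> m" "1 \<le> c - 2" "c - 2 < c + 2" "c + 2 \<le> m"
      using assms by linarith+
    show "even (b + (b+2))" by simp
    have "c - 2 + (c + 2) = 2*c" using assms(8) by linarith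
    then show "even (c - 2 + (c + 2))" by simp
    show "even (b + (c - 2))" using assms(6,8) by presburger
  qed
  ultimately show ?case by (metis poc_comp)
next
  case (Suc i)
  define r where "r = 4*i+2"
  have bnd: "Suc (Suc (Suc (Suc r))) \<le> 4*k+2" using Suc.prems unfolding r_def by linarith
  have c1: "4*k+3 \<le> c" "c + 4*k+2 \<le> m" using assms by auto
  have e: "4 * Suc i + 2 = Suc (Suc (Suc (Suc r)))" unfolding r_def by simp
  have st: "rfl c (Suc (Suc (Suc (Suc r)))) = rfl c r \<circ> ((tp c (Suc r) \<circ> tp c (Suc (Suc (Suc r)))) \<circ>
     (tp c (Suc (Suc r)) \<circ> tp c (Suc (Suc (Suc (Suc r))))))"
    using bnd c1 by (intro refl_step) linarith
  have pp: "product_of_crossings n m (tp c d \<circ> tp c d')" if dd: "d < d'" "d' \<le> 4*k+2" "even (d + d')" "1 \<le> d" for d d'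
    unfolding tp_def
  proof (rule S2)
    show "1 \<le> c - d" "c - d < c + d" "c + d \<le> m" "1 \<le> c - d'" "c - d' < c + d'" "c + d' \<le> m"
      using dd c1 by linarith+
    have "c - d + (c + d) = 2*c" "c - d' + (c + d') = 2*c" using dd c1 by linarith+
    then show "even (c - d + (c + d))" "even (c - d' + (c + d'))" by simp_all
    obtain q where q: "d' = d + 2*q" using dd(1,3) by (metis add_diff_inverse_nat dvd_def even_add even_diff_nat less_imp_le not_less)
    have "c - d + (c - d') = 2*(c-d') + 2*q" using q dd c1 by linarith
    then show "even (c - d + (c - d'))" by simp
  qed
  have p1: "product_of_crossings n m (tp c (Suc r) \<circ> tp c (Suc (Suc (Suc r))))"
    using bnd by (intro pp) auto
  have p2: "product_of_crossings n m (tp c (Suc (Suc r)) \<circ> tp c (Suc (Suc (Suc (Suc r)))))"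
    using bnd by (intro pp) auto
  have ih: "product_of_crossings n m (tau a \<circ> tau b \<circ> rfl c r)" unfolding r_def using Suc.IH Suc.prems by (metis Suc_leD)
  show ?case unfolding e st using poc_comp[OF ih poc_comp[OF p1 p2]] by (simp only: comp_assoc)
qed

end

theorem lemma4p6:
  fixes k n m a b :: nat
  assumes "n = 8 * k + 5"
    and "m \<ge> 4 * n - 4"
    and "odd (a + b)"
    and "1 \<le> a" and "a + 2 < b" and "b + 2 \<le> m"
  shows "product_of_crossings n m (transpose a (a + 2) \<circ> transpose b (b + 2))"
proof -
  define j where "j = (if even b then 2 else 1::nat)"
  define c where "c = j + (4*k+2)"
  have n5: "n \<ge> 5" and mb: "3 * n \<le> m + 2" using assms by linarith+
  have cr: "crossing n j = rfl c (4*k+2)" unfolding c_def by (rule cross_refl) (simp add: assms(1))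
  have j12: "1 \<le> j" "j \<le> 2" unfolding j_def by auto
  have ecb: "even (c + b)" unfolding c_def j_def by auto
  have X: "product_of_crossings n m (tau a \<circ> tau b \<circ> rfl c (4*k+2))"
    using X_ind[OF n5 mb, of a b c k k] assms ecb j12 unfolding c_def by linarith
  have pc: "product_of_crossings n m (crossing n j)" using j12 assms by (intro poc_cross) linarith+
  have inv: "crossing n j \<circ> crossing n j = id" using n5 by (intro crossing_invol) simp
  have "tau a \<circ> tau b = (tau a \<circ> tau b \<circ> rfl c (4*k+2)) \<circ> crossing n j"
    using inv cr by (metis comp_assoc comp_id)
  then show ?thesis using poc_comp[OF X pc] by (simp add: tau_def)
qed

end
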